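(* For every integer $k\ge 5$, the adjacency matrix of the graph $W(k)$ has exactly $k-1$ nonpositive eigenvalues (counted with multiplicity).
   Context: All graphs are finite, simple and undirected. For an integer $k\ge 2$, the graph $W(k)$ on $k+\binom{k}{2}=\binom{k+1}{2}$ vertices is defined as follows. Its vertex set is $\{a_1,\dots,a_k\}\cup\{b_S : S\subseteq\{1,\dots,k\},\ |S|=2\}$. The vertices $a_1,\dots,a_k$ are pairwise adjacent (forming a complete graph $K_k$). Two vertices $b_S,b_T$ are adjacent iff $S\cap T=\emptyset$ (so these vertices form the Kneser graph $Kneser(k,2)$). A vertex $a_i$ is adjacent to $b_S$ iff $i\in S$. *)

theory Defs
  imports "Jordan_Normal_Form.Char_Poly" Complex_Main
begin

text \<open>Vertices of W(k): Inl i stands for a_i (1 \<le> i \<le> k),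
 Inr S stands for b_S (S a 2-subset of {1..k}).\<close>

definition W_vertices :: "nat \<Rightarrow> (nat + nat set) list" where
  "W_vertices k = map Inl [1..<k+1] @
     map (\<lambda>(i,j). Inr {i,j}) [(i,j). i \<leftarrow> [1..<k+1], j \<leftarrow> [i+1..<k+1]]"

fun W_adj :: "(nat + nat set) \<Rightarrow> (nat + nat set) \<Rightarrow> bool" where
  "W_adj (Inl i) (Inl j) = (i \<noteq> j)"
| "W_adj (Inr S) (Inr T) = (S \<inter> T = {})"
| "W_adj (Inl i) (Inr S) = (i \<in> S)"
| "W_adj (Inr S) (Inl i) = (i \<in> S)"

definition W_adj_mat :: "nat \<Rightarrow> real mat" where
  "W_adj_mat k = (let vs = W_vertices k; n = length vs in
     mat n n (\<lambda>(i,j). if W_adj (vs ! i) (vs ! j) then 1 else 0))"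

definition num_nonpos_eigenvalues :: "real mat \<Rightarrow> nat" where
  "num_nonpos_eigenvalues A =
     (\<Sum>x\<in>{x. poly (char_poly (map_mat complex_of_real A)) x = 0 \<and> Im x = 0 \<and> Re x \<le> 0}.
        order x (char_poly (map_mat complex_of_real A)))"

end

theory Submission
  imports Defs
begin

lemma char_poly_eig:
  fixes A P :: "'a::field mat"
  assumes A: "A \<in> carrier_mat n n" and P: "P \<in> carrier_mat n n" and dP: "det P \<noteq> 0"
    and AP: "A * P = P * mat n n (\<lambda>(i,j). if i = j then d i else 0)"
  shows "char_poly A = (\<Prod>i<n. [:- d i, 1:])"
proof -
  define D where "D = mat n n (\<lambda>(i,j). if i = j then d i else (0::'a))"
  have D: "D \<in> carrier_mat n n" unfolding D_def by simp
  from det_non_zero_imp_unit[OF P dP, of "()"]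
  obtain Q where Q: "Q \<in> carrier_mat n n" "Q * P = 1\<^sub>m n" "P * Q = 1\<^sub>m n"
    unfolding Units_def by (auto simp: ring_mat_def)
  have "A = A * (P * Q)" using A Q by simp
  also have "\<dots> = (A * P) * Q" using A P Q by (simp add: assoc_mult_mat)
  also have "\<dots> = P * D * Q" using AP D_def by simp
  finally have eq: "A = P * D * Q" .
  have "similar_mat A D" unfolding similar_mat_def similar_mat_wit_def Let_def
    using A P Q D eq by (intro exI[of _ P] exI[of _ Q]) auto
  hence "char_poly A = char_poly D" by (rule char_poly_similar)
  also have "\<dots> = (\<Prod> a \<leftarrow> diag_mat D. [:- a, 1:])"
    by (rule char_poly_upper_triangular[OF D]) (auto simp: upper_triangular_def D_def)
  also have "diag_mat D = map d [0..<n]" unfolding diag_mat_def D_def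
    by (auto intro!: nth_equalityI)
  also have "(\<Prod> a \<leftarrow> map d [0..<n]. [:- a, 1:]) = (\<Prod>i<n. [:- d i, 1:])"
    by (induction n) (auto simp: lessThan_Suc mult.commute)
  finally show ?thesis .
qed

lemma order_lin_prod:
  fixes d :: "'b \<Rightarrow> 'a::idom"
  assumes "finite I"
  shows "order x (\<Prod>i\<in>I. [:- d i, 1:]) = card {i\<in>I. d i = x}"
  using assms
proof (induction I rule: finite_induct)
  case empty then show ?case by simp
next
  case (insert j I)
  have ne: "(\<Prod>i\<in>I. [:- d i, 1:]) \<noteq> 0" using insert by (simp add: prod_zero_iff) 
  have "order x (\<Prod>i\<in>insert j I. [:- d i, 1:]) = order x [:- d j, 1:] + order x (\<Prod>i\<in>I. [:- d i, 1:])"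
    unfolding prod.insert[OF insert(1,2)] using ne by (intro order_mult) (simp only: mult_eq_0_iff de_Morgan_disj, simp)
  also have "order x [:- d j, 1:] = (if d j = x then 1 else 0)"
    using order_power_n_n[of x 1] by (auto intro: order_0I)
  moreover have "{i\<in>insert j I. d i = x} = (if d j = x then insert j {i\<in>I. d i = x} else {i\<in>I. d i = x})"
    by auto
  ultimately show ?case using insert by auto
qed

definition Pr :: "nat \<Rightarrow> nat set set" where "Pr k = {S. S \<subseteq> {1..k} \<and> card S = 2}"

lemma finite_Pr[simp]: "finite (Pr k)"
  unfolding Pr_def by (rule finite_subset[of _ "Pow {1..k}"]) auto

lemma Pr_elem: "S \<in> Pr k \<longleftrightarrow> (\<exists>p q. S = {p,q} \<and> 1 \<le> p \<and> p < q \<and> q \<le> k)"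
proof
  assume "S \<in> Pr k"
  then obtain a b where S: "S = {a,b}" "a \<noteq> b" "S \<subseteq> {1..k}" unfolding Pr_def by (auto simp: card_2_iff)
  show "\<exists>p q. S = {p,q} \<and> 1 \<le> p \<and> p < q \<and> q \<le> k"
  proof (cases "a < b")
    case True then show ?thesis using S by (intro exI[of _ a] exI[of _ b]) auto
  next
    case False then show ?thesis using S by (intro exI[of _ b] exI[of _ a]) auto
  qed
next
  assume "\<exists>p q. S = {p,q} \<and> 1 \<le> p \<and> p < q \<and> q \<le> k"
  then show "S \<in> Pr k" unfolding Pr_def by auto
qed

lemma Pr_sub: "S \<in> Pr k \<Longrightarrow> S \<subseteq> {1..k}" unfolding Pr_def by auto
lemma Pr_card: "S \<in> Pr k \<Longrightarrow> card S = 2" unfolding Pr_def by auto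

lemma Pr_containing:
  assumes i: "i \<in> {1..k}"
  shows "{S \<in> Pr k. i \<in> S} = (\<lambda>j. {i,j}) ` ({1..k} - {i})"
proof (rule equalityI; rule subsetI)
  fix S assume "S \<in> {S \<in> Pr k. i \<in> S}"
  then obtain p q where S: "S = {p,q}" "1 \<le> p" "p < q" "q \<le> k" "i \<in> S" by (auto simp: Pr_elem)
  show "S \<in> (\<lambda>j. {i,j}) ` ({1..k} - {i})"
  proof (cases "i = p")
    case True then show ?thesis using S by (intro image_eqI[of _ _ q]) auto
  next
    case False then show ?thesis using S by (intro image_eqI[of _ _ p]) auto
  qed
next
  fix S assume "S \<in> (\<lambda>j. {i,j}) ` ({1..k} - {i})"
  then obtain j where j: "j \<in> {1..k}" "j \<noteq> i" "S = {i,j}" by blast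
  then show "S \<in> {S \<in> Pr k. i \<in> S}" using i unfolding Pr_def by auto
qed

lemma sum_Pr_containing:
  assumes i: "i \<in> {1..k}"
  shows "(\<Sum>S\<in>{S \<in> Pr k. i \<in> S}. g S) = (\<Sum>j\<in>{1..k} - {i}. g {i,j})"
  unfolding Pr_containing[OF i]
  by (subst sum.reindex) (auto simp: inj_on_def doubleton_eq_iff)

definition sig :: "(nat \<Rightarrow> real) \<Rightarrow> nat set \<Rightarrow> real" where "sig x S = (\<Sum>t\<in>S. x t)"
definition ssum :: "nat \<Rightarrow> (nat \<Rightarrow> real) \<Rightarrow> real" where "ssum k x = (\<Sum>t\<in>{1..k}. x t)"

lemma sum_sig_swap:
  "(\<Sum>S\<in>Pr k. sig x S * g S) = (\<Sum>t\<in>{1..k}. x t * (\<Sum>S\<in>{S\<in>Pr k. t \<in> S}. g S))"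
proof -
  have "(\<Sum>S\<in>Pr k. sig x S * g S) = (\<Sum>S\<in>Pr k. \<Sum>t\<in>{1..k}. if t \<in> S then x t * g S else 0)"
  proof (rule sum.cong[OF refl])
    fix S assume S: "S \<in> Pr k"
    have "sig x S * g S = (\<Sum>t\<in>S. x t * g S)" unfolding sig_def by (simp add: sum_distrib_right)
    also have "\<dots> = (\<Sum>t\<in>{1..k}. if t \<in> S then x t * g S else 0)"
      using Pr_sub[OF S] by (intro sum.mono_neutral_cong_left) auto
    finally show "sig x S * g S = (\<Sum>t\<in>{1..k}. if t \<in> S then x t * g S else 0)" .
  qed
  also have "\<dots> = (\<Sum>t\<in>{1..k}. \<Sum>S\<in>Pr k. if t \<in> S then x t * g S else 0)" by (rule sum.swap)
  also have "\<dots> = (\<Sum>t\<in>{1..k}. x t * (\<Sum>S\<in>{S\<in>Pr k. t \<in> S}. g S))"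
    by (intro sum.cong refl) (simp add: sum.inter_filter[symmetric] sum_distrib_left)
  finally show ?thesis .
qed

lemma sum_sig_containing:
  assumes i: "i \<in> {1..k}"
  shows "(\<Sum>S\<in>{S \<in> Pr k. i \<in> S}. sig x S) = (real k - 2) * x i + ssum k x"
proof -
  have "(\<Sum>S\<in>{S \<in> Pr k. i \<in> S}. sig x S) = (\<Sum>j\<in>{1..k} - {i}. x i + x j)"
    unfolding sum_Pr_containing[OF i] by (intro sum.cong refl) (auto simp: sig_def)
  also have "\<dots> = real (k - 1) * x i + (ssum k x - x i)"
    using i by (simp add: sum.distrib ssum_def sum_diff1)
  also have "\<dots> = (real k - 2) * x i + ssum k x" using i by (simp add: of_nat_diff algebra_simps)
  finally show ?thesis .
qed

lemma count_containing:
  assumes i: "i \<in> {1..k}"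
  shows "(\<Sum>S\<in>{S \<in> Pr k. i \<in> S}. (1::real)) = real k - 1"
  unfolding sum_Pr_containing[OF i] using i by (simp add: of_nat_diff)

lemma sum_Pr_disjoint:
  assumes S: "S = {p,q}" "p \<noteq> q" "S \<in> Pr k"
  shows "(\<Sum>T\<in>{T\<in>Pr k. S \<inter> T = {}}. (g T::real)) =
     (\<Sum>T\<in>Pr k. g T) - (\<Sum>T\<in>{T\<in>Pr k. p \<in> T}. g T) - (\<Sum>T\<in>{T\<in>Pr k. q \<in> T}. g T) + g S"
proof -
  let ?A = "{T\<in>Pr k. p \<in> T}" and ?B = "{T\<in>Pr k. q \<in> T}" and ?D = "{T\<in>Pr k. S \<inter> T = {}}"
  have AB: "?A \<inter> ?B = {S}"
  proof
    show "?A \<inter> ?B \<subseteq> {S}"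
    proof
      fix T assume T: "T \<in> ?A \<inter> ?B"
      hence "S \<subseteq> T" "card T = 2" "finite T" using S by (auto simp: Pr_card card_ge_0_finite)
      moreover have "card S = 2" using S by simp
      ultimately have "S = T" by (simp add: card_subset_eq)
      thus "T \<in> {S}" by simp
    qed
    show "{S} \<subseteq> ?A \<inter> ?B" using S by auto
  qed
  have U: "Pr k = ?D \<union> (?A \<union> ?B)" using S by auto
  have "(\<Sum>T\<in>Pr k. g T) = (\<Sum>T\<in>?D. g T) + (\<Sum>T\<in>?A \<union> ?B. g T)"
    by (subst U, rule sum.union_disjoint) (use S in auto)
  moreover have "(\<Sum>T\<in>?A \<union> ?B. g T) + (\<Sum>T\<in>?A \<inter> ?B. g T) = (\<Sum>T\<in>?A. g T) + (\<Sum>T\<in>?B. g T)"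
    by (rule sum.union_inter) auto
  ultimately show ?thesis using AB by simp
qed

definition VS :: "nat \<Rightarrow> (nat + nat set) set" where "VS k = Inl ` {1..k} \<union> Inr ` Pr k"
definition adjr :: "(nat + nat set) \<Rightarrow> (nat + nat set) \<Rightarrow> real" where
  "adjr v w = (if W_adj v w then 1 else 0)"
definition Af :: "nat \<Rightarrow> ((nat + nat set) \<Rightarrow> real) \<Rightarrow> (nat + nat set) \<Rightarrow> real" where
  "Af k f v = (\<Sum>w\<in>VS k. adjr v w * f w)"
definition L :: "real \<Rightarrow> real \<Rightarrow> (nat \<Rightarrow> real) \<Rightarrow> (nat + nat set) \<Rightarrow> real" where
  "L \<alpha> \<gamma> x v = (case v of Inl i \<Rightarrow> \<alpha> * x i | Inr S \<Rightarrow> \<gamma> * sig x S)"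

lemma finite_VS[simp]: "finite (VS k)" unfolding VS_def by simp

lemma sum_VS: "(\<Sum>v\<in>VS k. g v) = (\<Sum>i\<in>{1..k}. g (Inl i)) + (\<Sum>S\<in>Pr k. g (Inr S))"
  unfolding VS_def
  by (subst sum.union_disjoint) (auto simp: sum.reindex)

lemma sum_if_neq: "i \<in> {1..k} \<Longrightarrow> (\<Sum>j\<in>{1..k}. (if i \<noteq> j then x j else 0)) = ssum k x - (x i::real)"
proof -
  assume i: "i \<in> {1..k}"
  have "(\<Sum>j\<in>{1..k}. (if i \<noteq> j then x j else 0)) = (\<Sum>j\<in>{1..k}-{i}. x j)"
    by (rule sum.mono_neutral_cong_right) auto
  also have "\<dots> = ssum k x - x i" using i unfolding ssum_def by (simp add: sum_diff1)
  finally show ?thesis .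
qed

lemma Af_L_Inl:
  assumes i: "i \<in> {1..k}"
  shows "Af k (L \<alpha> \<gamma> x) (Inl i) = \<alpha> * (ssum k x - x i) + \<gamma> * ((real k - 2) * x i + ssum k x)"
proof -
  have "Af k (L \<alpha> \<gamma> x) (Inl i) = (\<Sum>j\<in>{1..k}. \<alpha> * (if i \<noteq> j then x j else 0)) + (\<Sum>S\<in>Pr k. \<gamma> * (if i \<in> S then sig x S else 0))"
    unfolding Af_def sum_VS by (intro arg_cong2[where f="(+)"] sum.cong refl) (auto simp: adjr_def L_def)
  also have "\<dots> = \<alpha> * (\<Sum>j\<in>{1..k}. (if i \<noteq> j then x j else 0)) + \<gamma> * (\<Sum>S\<in>{S\<in>Pr k. i \<in> S}. sig x S)"
    by (simp add: sum_distrib_left[symmetric] sum.inter_filter[symmetric])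
  also have "\<dots> = \<alpha> * (ssum k x - x i) + \<gamma> * ((real k - 2) * x i + ssum k x)"
    by (simp only: sum_if_neq[OF i] sum_sig_containing[OF i])
  finally show ?thesis .
qed

lemma Af_L_Inr:
  assumes S: "S \<in> Pr k"
  shows "Af k (L \<alpha> \<gamma> x) (Inr S) = \<alpha> * sig x S + \<gamma> * (real k - 3) * (ssum k x - sig x S)"
proof -
  obtain p q where pq: "S = {p,q}" "1 \<le> p" "p < q" "q \<le> k" using S by (auto simp: Pr_elem)
  have "Af k (L \<alpha> \<gamma> x) (Inr S) = (\<Sum>j\<in>{1..k}. \<alpha> * (if j \<in> S then x j else 0)) + (\<Sum>S'\<in>Pr k. \<gamma> * (if S \<inter> S' = {} then sig x S' else 0))"
    unfolding Af_def sum_VS by (intro arg_cong2[where f="(+)"] sum.cong refl) (auto simp: adjr_def L_def)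
  also have "(\<Sum>j\<in>{1..k}. \<alpha> * (if j \<in> S then x j else 0)) = \<alpha> * sig x S"
  proof -
    have "(\<Sum>j\<in>{1..k}. (if j \<in> S then x j else 0)) = sig x S"
      unfolding sig_def using Pr_sub[OF S] by (intro sum.mono_neutral_cong_right) auto
    thus ?thesis by (simp add: sum_distrib_left[symmetric])
  qed
  also have "(\<Sum>S'\<in>Pr k. \<gamma> * (if S \<inter> S' = {} then sig x S' else 0)) = \<gamma> * (\<Sum>S'\<in>{T\<in>Pr k. S \<inter> T = {}}. sig x S')"
    by (simp add: sum_distrib_left[symmetric] sum.inter_filter[symmetric])
  also have "(\<Sum>S'\<in>{T\<in>Pr k. S \<inter> T = {}}. sig x S') = 
     (\<Sum>T\<in>Pr k. sig x T) - (\<Sum>T\<in>{T\<in>Pr k. p \<in> T}. sig x T) - (\<Sum>T\<in>{T\<in>Pr k. q \<in> T}. sig x T) + sig x S"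
    by (rule sum_Pr_disjoint) (use pq S in auto)
  also have "(\<Sum>T\<in>Pr k. sig x T) = (real k - 1) * ssum k x"
  proof -
    have "(\<Sum>T\<in>Pr k. sig x T) = (\<Sum>T\<in>Pr k. sig x T * 1)" by simp
    also have "\<dots> = (\<Sum>t\<in>{1..k}. x t * (\<Sum>S\<in>{S\<in>Pr k. t \<in> S}. 1))" by (rule sum_sig_swap)
    also have "\<dots> = (\<Sum>t\<in>{1..k}. x t * (real k - 1))" 
    proof (rule sum.cong[OF refl])
      fix t assume "t \<in> {1..k}"
      thus "x t * (\<Sum>S\<in>{S\<in>Pr k. t \<in> S}. 1) = x t * (real k - 1)" by (simp only: count_containing)
    qed
    also have "\<dots> = (real k - 1) * ssum k x" by (simp add: ssum_def sum_distrib_left mult.commute)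
    finally show ?thesis .
  qed
  finally have "Af k (L \<alpha> \<gamma> x) (Inr S) = \<alpha> * sig x S + \<gamma> * ((real k - 1) * ssum k x - (\<Sum>T\<in>{T\<in>Pr k. p \<in> T}. sig x T) - (\<Sum>T\<in>{T\<in>Pr k. q \<in> T}. sig x T) + sig x S)" .
  moreover have "sig x S = x p + x q" using pq by (simp add: sig_def)
  ultimately show ?thesis using pq sum_sig_containing[of p k x] sum_sig_containing[of q k x]
    by (simp add: algebra_simps)
qed

definition Zf :: "(nat set \<Rightarrow> real) \<Rightarrow> (nat + nat set) \<Rightarrow> real" where
  "Zf z v = (case v of Inl _ \<Rightarrow> 0 | Inr S \<Rightarrow> z S)"

definition ip :: "nat \<Rightarrow> ((nat + nat set) \<Rightarrow> real) \<Rightarrow> ((nat + nat set) \<Rightarrow> real) \<Rightarrow> real" where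
  "ip k f g = (\<Sum>v\<in>VS k. f v * g v)"

definition ipn :: "nat \<Rightarrow> (nat \<Rightarrow> real) \<Rightarrow> (nat \<Rightarrow> real) \<Rightarrow> real" where
  "ipn k x y = (\<Sum>i\<in>{1..k}. x i * y i)"

lemma sig_one: "S \<in> Pr k \<Longrightarrow> sig (\<lambda>_. 1) S = 2"
  unfolding sig_def by (simp add: Pr_card)

lemma sum_Pr_ker:
  assumes ker: "\<forall>i\<in>{1..k}. (\<Sum>S\<in>{S\<in>Pr k. i \<in> S}. z S) = 0"
  shows "(\<Sum>S\<in>Pr k. z S) = (0::real)"
proof -
  have "2 * (\<Sum>S\<in>Pr k. z S) = (\<Sum>S\<in>Pr k. sig (\<lambda>_. 1) S * z S)"
    by (simp add: sum_distrib_left sig_one)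
  also have "\<dots> = (\<Sum>t\<in>{1..k}. 1 * (\<Sum>S\<in>{S\<in>Pr k. t \<in> S}. z S))" by (rule sum_sig_swap)
  also have "\<dots> = 0" using ker by simp
  finally show ?thesis by simp
qed

lemma Af_Z:
  assumes ker: "\<forall>i\<in>{1..k}. (\<Sum>S\<in>{S\<in>Pr k. i \<in> S}. z S) = 0" and v: "v \<in> VS k"
  shows "Af k (Zf z) v = Zf z v"
proof -
  consider (l) i where "v = Inl i" "i \<in> {1..k}" | (r) S where "v = Inr S" "S \<in> Pr k"
    using v unfolding VS_def by auto
  then show ?thesis
  proof cases
    case l
    have "Af k (Zf z) v = (\<Sum>S\<in>Pr k. (if i \<in> S then z S else 0))"
      unfolding Af_def sum_VS using l by (auto simp: adjr_def Zf_def intro!: sum.cong)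
    also have "\<dots> = (\<Sum>S\<in>{S\<in>Pr k. i \<in> S}. z S)" by (simp add: sum.inter_filter)
    also have "\<dots> = 0" using ker l by simp
    finally show ?thesis using l by (simp add: Zf_def)
  next
    case r
    obtain p q where pq: "S = {p,q}" "1 \<le> p" "p < q" "q \<le> k" using r by (auto simp: Pr_elem)
    have "Af k (Zf z) v = (\<Sum>T\<in>Pr k. (if S \<inter> T = {} then z T else 0))"
      unfolding Af_def sum_VS using r by (auto simp: adjr_def Zf_def intro!: sum.cong)
    also have "\<dots> = (\<Sum>T\<in>{T\<in>Pr k. S \<inter> T = {}}. z T)" by (simp add: sum.inter_filter)
    also have "\<dots> = (\<Sum>T\<in>Pr k. z T) - (\<Sum>T\<in>{T\<in>Pr k. p \<in> T}. z T) - (\<Sum>T\<in>{T\<in>Pr k. q \<in> T}. z T) + z S"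
      by (rule sum_Pr_disjoint) (use pq r in auto)
    also have "\<dots> = z S" using ker pq sum_Pr_ker[OF ker] by simp
    finally show ?thesis using r by (simp add: Zf_def)
  qed
qed

lemma sum_sig_sig:
  "(\<Sum>S\<in>Pr k. sig x S * sig y S) = (real k - 2) * ipn k x y + ssum k x * ssum k y"
proof -
  have "(\<Sum>S\<in>Pr k. sig x S * sig y S) = (\<Sum>t\<in>{1..k}. x t * (\<Sum>S\<in>{S\<in>Pr k. t \<in> S}. sig y S))"
    by (rule sum_sig_swap)
  also have "\<dots> = (\<Sum>t\<in>{1..k}. x t * ((real k - 2) * y t + ssum k y))"
  proof (rule sum.cong[OF refl])
    fix t assume "t \<in> {1..k}"
    thus "x t * (\<Sum>S\<in>{S\<in>Pr k. t \<in> S}. sig y S) = x t * ((real k - 2) * y t + ssum k y)"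
      by (simp only: sum_sig_containing)
  qed
  also have "\<dots> = (\<Sum>t\<in>{1..k}. (real k - 2) * (x t * y t) + ssum k y * x t)"
    by (intro sum.cong refl) (simp add: algebra_simps)
  also have "\<dots> = (real k - 2) * (\<Sum>t\<in>{1..k}. x t * y t) + ssum k y * (\<Sum>t\<in>{1..k}. x t)"
    by (simp only: sum.distrib sum_distrib_left)
  also have "\<dots> = (real k - 2) * ipn k x y + ssum k x * ssum k y"
    unfolding ipn_def ssum_def[of k x] by simp
  finally show ?thesis .
qed

lemma ip_L: "ip k (L a c x) (L a' c' y) = a * a' * ipn k x y + c * c' * ((real k - 2) * ipn k x y + ssum k x * ssum k y)"
proof -
  have "ip k (L a c x) (L a' c' y) = a * a' * ipn k x y + c * c' * (\<Sum>S\<in>Pr k. sig x S * sig y S)"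
    unfolding ip_def sum_VS by (simp add: L_def ipn_def sum_distrib_left algebra_simps)
  thus ?thesis by (simp add: sum_sig_sig)
qed

lemma ip_LZ:
  assumes ker: "\<forall>i\<in>{1..k}. (\<Sum>S\<in>{S\<in>Pr k. i \<in> S}. z S) = 0"
  shows "ip k (L a c x) (Zf z) = 0"
proof -
  have "ip k (L a c x) (Zf z) = c * (\<Sum>S\<in>Pr k. sig x S * z S)"
    unfolding ip_def sum_VS by (simp add: L_def Zf_def sum_distrib_left algebra_simps)
  also have "(\<Sum>S\<in>Pr k. sig x S * z S) = (\<Sum>t\<in>{1..k}. x t * (\<Sum>S\<in>{S\<in>Pr k. t \<in> S}. z S))"
    by (rule sum_sig_swap)
  also have "\<dots> = 0" using ker by simp
  finally show ?thesis by simp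
qed

definition cc :: "nat \<Rightarrow> real" where "cc k = (real k - 2) * (real k - 3) / 2"
definition tt :: "nat \<Rightarrow> real" where "tt k = cc k + real k - 1"
definition pp :: "nat \<Rightarrow> real" where "pp k = (real k - 1) * (cc k - 2)"
definition dl :: "nat \<Rightarrow> real" where "dl k = sqrt (tt k ^ 2 - 4 * pp k)"
definition lam1 :: "nat \<Rightarrow> real" where "lam1 k = (tt k + dl k) / 2"
definition lam2 :: "nat \<Rightarrow> real" where "lam2 k = (tt k - dl k) / 2"
definition dm :: "nat \<Rightarrow> real" where "dm k = sqrt ((real k - 2) ^ 2 + 4)"
definition mup :: "nat \<Rightarrow> real" where "mup k = (- (real k - 2) + dm k) / 2"
definition mum :: "nat \<Rightarrow> real" where "mum k = (- (real k - 2) - dm k) / 2"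

lemma cc_ge: "k \<ge> 5 \<Longrightarrow> cc k \<ge> 3"
proof -
  assume k: "k \<ge> 5"
  hence "real k - 2 \<ge> 3" "real k - 3 \<ge> 2" by auto
  hence "(real k - 2) * (real k - 3) \<ge> 3 * 2" by (intro mult_mono) auto
  thus ?thesis unfolding cc_def by simp
qed

lemma disc_nonneg: "tt k ^ 2 - 4 * pp k = (cc k - (real k - 1)) ^ 2 + 8 * (real k - 1)"
  unfolding tt_def pp_def by (simp add: power2_eq_square algebra_simps)

lemma dl_sq: "k \<ge> 1 \<Longrightarrow> dl k ^ 2 = tt k ^ 2 - 4 * pp k"
proof -
  assume k: "k \<ge> 1"
  have "0 \<le> (cc k - (real k - 1)) ^ 2 + 8 * (real k - 1)" using k by (intro add_nonneg_nonneg) auto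
  hence "0 \<le> tt k ^ 2 - 4 * pp k" by (simp only: disc_nonneg)
  thus ?thesis unfolding dl_def by (simp only: real_sqrt_pow2)
qed

lemma dl_nonneg: "k \<ge> 1 \<Longrightarrow> dl k \<ge> 0"
proof -
  assume k: "k \<ge> 1"
  have "0 \<le> (cc k - (real k - 1)) ^ 2 + 8 * (real k - 1)" using k by (intro add_nonneg_nonneg) auto
  hence "0 \<le> tt k ^ 2 - 4 * pp k" by (simp only: disc_nonneg)
  thus ?thesis unfolding dl_def by simp
qed

lemma lam_sum: "lam1 k + lam2 k = tt k" unfolding lam1_def lam2_def by (simp add: field_simps)
lemma lam_prod: "k \<ge> 1 \<Longrightarrow> lam1 k * lam2 k = pp k"
proof -
  assume "k \<ge> 1"
  hence "dl k ^ 2 = tt k ^ 2 - 4 * pp k" by (rule dl_sq)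
  thus ?thesis unfolding lam1_def lam2_def by (simp add: power2_eq_square algebra_simps)
qed
lemma lam1_eq: "k \<ge> 1 \<Longrightarrow> lam1 k ^ 2 - tt k * lam1 k + pp k = 0"
proof -
  assume k: "k \<ge> 1"
  have "lam1 k ^ 2 - tt k * lam1 k + pp k = lam1 k ^ 2 - (lam1 k + lam2 k) * lam1 k + lam1 k * lam2 k"
    by (simp add: lam_sum lam_prod[OF k])
  also have "\<dots> = 0" by (simp add: power2_eq_square algebra_simps)
  finally show ?thesis .
qed
lemma lam2_eq: "k \<ge> 1 \<Longrightarrow> lam2 k ^ 2 - tt k * lam2 k + pp k = 0"
proof -
  assume k: "k \<ge> 1"
  have "lam2 k ^ 2 - tt k * lam2 k + pp k = lam2 k ^ 2 - (lam1 k + lam2 k) * lam2 k + lam1 k * lam2 k"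
    by (simp add: lam_sum lam_prod[OF k])
  also have "\<dots> = 0" by (simp add: power2_eq_square algebra_simps)
  finally show ?thesis .
qed

lemma tt_pos: "k \<ge> 5 \<Longrightarrow> tt k > 0" using cc_ge[of k] unfolding tt_def by simp
lemma pp_pos: "k \<ge> 5 \<Longrightarrow> pp k > 0" using cc_ge[of k] unfolding pp_def by simp

lemma lam2_pos: "k \<ge> 5 \<Longrightarrow> lam2 k > 0"
proof -
  assume k: "k \<ge> 5"
  have "dl k ^ 2 < tt k ^ 2" using dl_sq[of k] pp_pos[OF k] k by simp
  hence "dl k < tt k" using tt_pos[OF k] dl_nonneg[of k] k by (simp add: power_less_imp_less_base)
  thus ?thesis unfolding lam2_def by simp
qed
lemma lam1_pos: "k \<ge> 5 \<Longrightarrow> lam1 k > 0"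
  using tt_pos[of k] dl_nonneg[of k] unfolding lam1_def by simp

lemma dm_sq: "dm k ^ 2 = (real k - 2) ^ 2 + 4" unfolding dm_def by simp
lemma mu_sum: "mup k + mum k = - (real k - 2)" unfolding mup_def mum_def by (simp add: field_simps)
lemma mu_prod: "mup k * mum k = -1"
  using dm_sq[of k] unfolding mup_def mum_def by (simp add: power2_eq_square algebra_simps)
lemma mup_eq: "mup k ^ 2 + (real k - 2) * mup k - 1 = 0"
proof -
  have "mup k ^ 2 + (real k - 2) * mup k - 1 = mup k ^ 2 - (mup k + mum k) * mup k + mup k * mum k"
    by (simp only: mu_sum mu_prod)
  also have "\<dots> = 0" by (simp add: power2_eq_square algebra_simps)
  finally show ?thesis .
qed
lemma mum_eq: "mum k ^ 2 + (real k - 2) * mum k - 1 = 0"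
proof -
  have "mum k ^ 2 + (real k - 2) * mum k - 1 = mum k ^ 2 - (mup k + mum k) * mum k + mup k * mum k"
    by (simp only: mu_sum mu_prod)
  also have "\<dots> = 0" by (simp add: power2_eq_square algebra_simps)
  finally show ?thesis .
qed
lemma dm_pos: "dm k > 0" unfolding dm_def by (simp add: add_nonneg_pos)
lemma mum_neg: "k \<ge> 2 \<Longrightarrow> mum k < 0"
  using dm_pos[of k] unfolding mum_def by simp
lemma mup_pos: "k \<ge> 2 \<Longrightarrow> mup k > 0"
proof -
  assume k: "k \<ge> 2"
  have "(real k - 2) ^ 2 < dm k ^ 2" using dm_sq[of k] by simp
  hence "real k - 2 < dm k" unfolding dm_def by (intro real_less_rsqrt) simp
  thus ?thesis unfolding mup_def by simp
qed

definition hel :: "nat \<Rightarrow> nat \<Rightarrow> real" where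
  "hel m i = (if i < m then 1 else if i = m then - (real m - 1) else 0)"

lemma ssum_hel: assumes "2 \<le> m" "m \<le> k" shows "ssum k (hel m) = 0"
proof -
  have "ssum k (hel m) = (\<Sum>i\<in>{1..m}. hel m i)"
    unfolding ssum_def using assms by (intro sum.mono_neutral_right) (auto simp: hel_def)
  also have "{1..m} = insert m {1..<m}" using assms by auto
  also have "(\<Sum>i\<in>insert m {1..<m}. hel m i) = hel m m + (\<Sum>i\<in>{1..<m}. hel m i)" by simp
  also have "(\<Sum>i\<in>{1..<m}. hel m i) = (\<Sum>i\<in>{1..<m}. 1)" by (intro sum.cong) (auto simp: hel_def)
  also have "\<dots> = real m - 1" using assms by (simp add: of_nat_diff)
  finally show ?thesis unfolding hel_def[of m m] by simp
qed

lemma ipn_hel: assumes "2 \<le> m" "m < m'" "m' \<le> k" shows "ipn k (hel m) (hel m') = 0"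
proof -
  have "ipn k (hel m) (hel m') = ssum k (hel m)"
    unfolding ipn_def ssum_def using assms by (intro sum.cong) (auto simp: hel_def)
  thus ?thesis using ssum_hel[of m k] assms by simp
qed

lemma ipn_comm: "ipn k x y = ipn k y x" unfolding ipn_def by (simp add: mult.commute)

lemma ipn_one_hel: assumes "2 \<le> m" "m \<le> k" shows "ipn k (\<lambda>_. 1) (hel m) = 0"
  using ssum_hel[OF assms] unfolding ipn_def ssum_def by simp

lemma ssum_one: "ssum k (\<lambda>_. 1) = real k" unfolding ssum_def by simp

lemma ipn_pos: assumes "1 \<le> k" "x 1 = 1" shows "ipn k x x \<ge> 1"
proof -
  have "x 1 * x 1 \<le> ipn k x x" unfolding ipn_def
    using assms by (intro member_le_sum[of 1 "{1..k}" "\<lambda>i. x i * x i"]) auto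
  thus ?thesis using assms by simp
qed

lemma VS_cases:
  assumes "v \<in> VS k"
  obtains (l) i where "v = Inl i" "i \<in> {1..k}" | (r) S where "v = Inr S" "S \<in> Pr k"
  using assms unfolding VS_def by auto

lemma sig_one': "S \<in> Pr k \<Longrightarrow> sig (\<lambda>_. 1) S = 2" by (rule sig_one)

lemma eig_one:
  assumes k: "k \<ge> 1" and ev: "ev ^ 2 - tt k * ev + pp k = 0" and v: "v \<in> VS k"
  shows "Af k (L (ev - cc k) 1 (\<lambda>_. 1)) v = ev * L (ev - cc k) 1 (\<lambda>_. 1) v"
  using v
proof (cases rule: VS_cases)
  case (l i)
  have "(ev - cc k) * (real k - 1) + ((real k - 2) + real k) - ev * (ev - cc k) = - (ev ^ 2 - tt k * ev + pp k)"
    unfolding tt_def pp_def by (simp add: algebra_simps power2_eq_square)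
  hence "(ev - cc k) * (real k - 1) + ((real k - 2) + real k) = ev * (ev - cc k)" using ev by simp
  thus ?thesis using l by (simp add: Af_L_Inl ssum_one L_def)
next
  case (r S)
  have "(ev - cc k) * 2 + (real k - 3) * (real k - 2) = ev * 2" unfolding cc_def by (simp add: field_simps)
  thus ?thesis using r by (simp add: Af_L_Inr ssum_one L_def sig_one algebra_simps)
qed

lemma eig_hel:
  assumes m: "2 \<le> m" "m \<le> k" and ev: "ev ^ 2 + (real k - 2) * ev - 1 = 0" and v: "v \<in> VS k"
  shows "Af k (L (ev + real k - 3) 1 (hel m)) v = ev * L (ev + real k - 3) 1 (hel m) v"
  using v
proof (cases rule: VS_cases)
  case (l i)
  have "(ev + real k - 3) * (0 - hel m i) + ((real k - 2) * hel m i + 0) - ev * ((ev + real k - 3) * hel m i)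
     = - (ev ^ 2 + (real k - 2) * ev - 1) * hel m i"
    by (simp add: algebra_simps power2_eq_square)
  hence "(ev + real k - 3) * (0 - hel m i) + ((real k - 2) * hel m i + 0) = ev * ((ev + real k - 3) * hel m i)"
    using ev by simp
  thus ?thesis using l m by (simp add: Af_L_Inl ssum_hel L_def)
next
  case (r S)
  thus ?thesis using m by (simp add: Af_L_Inr ssum_hel L_def algebra_simps)
qed

definition ind :: "nat set \<Rightarrow> nat set \<Rightarrow> real" where "ind R T = (if T = R then 1 else 0)"
definition zv :: "nat set \<Rightarrow> nat set \<Rightarrow> real" where
  "zv S T = ind S T - ind {1, Min S} T - ind {1, Max S} T + ind {1,2} T + ind {1,3} T - ind {2,3} T"
definition spec :: "(nat + nat set) \<Rightarrow> bool" where
  "spec u = (case u of Inl i \<Rightarrow> True | Inr S \<Rightarrow> 1 \<in> S \<or> S = {2,3})"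
definition colf :: "nat \<Rightarrow> (nat + nat set) \<Rightarrow> (nat + nat set) \<Rightarrow> real" where
  "colf k u = (case u of Inl i \<Rightarrow> if i = 1 then L (lam1 k - cc k) 1 (\<lambda>_. 1) else L (mup k + real k - 3) 1 (hel i)
     | Inr S \<Rightarrow> if S = {2,3} then L (lam2 k - cc k) 1 (\<lambda>_. 1)
        else if 1 \<in> S then L (mum k + real k - 3) 1 (hel (Max S)) else Zf (zv S))"
definition evf :: "nat \<Rightarrow> (nat + nat set) \<Rightarrow> real" where
  "evf k u = (case u of Inl i \<Rightarrow> if i = 1 then lam1 k else mup k
     | Inr S \<Rightarrow> if S = {2,3} then lam2 k else if 1 \<in> S then mum k else 1)"

lemma Pr_with1: assumes "S \<in> Pr k" "1 \<in> S" shows "S = {1, Max S}" "2 \<le> Max S" "Max S \<le> k"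
proof -
  obtain p q where pq: "S = {p,q}" "1 \<le> p" "p < q" "q \<le> k" using assms by (auto simp: Pr_elem)
  have "p = 1" using pq assms by auto
  thus "S = {1, Max S}" "2 \<le> Max S" "Max S \<le> k" using pq by auto
qed

lemma Pr_without1: assumes "S \<in> Pr k" "1 \<notin> S"
  shows "S = {Min S, Max S}" "2 \<le> Min S" "Min S < Max S" "Max S \<le> k"
proof -
  obtain p q where pq: "S = {p,q}" "1 \<le> p" "p < q" "q \<le> k" using assms by (auto simp: Pr_elem)
  have "p \<noteq> 1" using pq assms by auto
  thus "S = {Min S, Max S}" "2 \<le> Min S" "Min S < Max S" "Max S \<le> k" using pq by auto
qed

lemma pair_in_Pr: "1 \<le> p \<Longrightarrow> p < q \<Longrightarrow> q \<le> k \<Longrightarrow> {p,q} \<in> Pr k"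
  unfolding Pr_elem by blast

lemma sum_ind: "finite A \<Longrightarrow> (\<Sum>T\<in>A. ind R T) = (if R \<in> A then 1 else 0)"
  unfolding ind_def by (simp add: sum.delta)

lemma zv_ker:
  assumes S: "S \<in> Pr k" "1 \<notin> S" and k: "k \<ge> 3"
  shows "\<forall>i\<in>{1..k}. (\<Sum>T\<in>{T\<in>Pr k. i \<in> T}. zv S T) = 0"
proof
  fix i assume i: "i \<in> {1..k}"
  note P = Pr_without1[OF S]
  define p q where "p = Min S" "q = Max S"
  have PS: "{1, p} \<in> Pr k" "{1, q} \<in> Pr k" "{1,2} \<in> Pr k" "{1,3} \<in> Pr k" "{2,3} \<in> Pr k"
    using P k unfolding p_q_def by (auto intro!: pair_in_Pr)
  have "(\<Sum>T\<in>{T\<in>Pr k. i \<in> T}. zv S T) =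
     (if i \<in> S then 1 else 0) - (if i \<in> {1,p} then 1 else 0) - (if i \<in> {1,q} then 1 else 0)
     + (if i \<in> {1,2} then 1 else 0) + (if i \<in> {1,3} then 1 else 0) - (if i \<in> {2,3} then 1 else 0)"
    unfolding zv_def p_q_def[symmetric] using PS S
    by (simp add: sum.distrib sum_subtractf sum_ind)
  also have "\<dots> = 0" using P unfolding p_q_def[symmetric] by (cases "i = 1"; cases "i = 2"; cases "i = 3"; auto)
  finally show "(\<Sum>T\<in>{T\<in>Pr k. i \<in> T}. zv S T) = 0" .
qed

lemma eig_col:
  assumes k: "k \<ge> 5" and u: "u \<in> VS k" and v: "v \<in> VS k"
  shows "Af k (colf k u) v = evf k u * colf k u v"
  using u
proof (cases rule: VS_cases)
  case (l i)
  show ?thesis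
  proof (cases "i = 1")
    case True
    thus ?thesis using l eig_one[OF _ lam1_eq v] k by (simp add: colf_def evf_def)
  next
    case False
    thus ?thesis using l eig_hel[of i k "mup k", OF _ _ mup_eq v] k by (simp add: colf_def evf_def)
  qed
next
  case (r S)
  show ?thesis
  proof (cases "S = {2,3}")
    case True
    thus ?thesis using r eig_one[OF _ lam2_eq v] k by (simp add: colf_def evf_def)
  next
    case False
    show ?thesis
    proof (cases "1 \<in> S")
      case True
      thus ?thesis using r False Pr_with1[OF r(2) True] eig_hel[of "Max S" k "mum k", OF _ _ mum_eq v] k
        by (simp add: colf_def evf_def)
    next
      case n1: False
      thus ?thesis using r False Af_Z[OF zv_ker[OF r(2) n1] v] k by (simp add: colf_def evf_def)
    qed
  qed
qed

definition xx :: "nat \<Rightarrow> nat \<Rightarrow> real" where "xx m = (if m = 1 then (\<lambda>_. 1) else hel m)"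
definition key :: "(nat + nat set) \<Rightarrow> nat" where
  "key u = (case u of Inl i \<Rightarrow> i | Inr S \<Rightarrow> if S = {2,3} then 1 else Max S)"
definition alf :: "nat \<Rightarrow> (nat + nat set) \<Rightarrow> real" where
  "alf k u = (case u of Inl i \<Rightarrow> if i = 1 then lam1 k - cc k else mup k + real k - 3
     | Inr S \<Rightarrow> if S = {2,3} then lam2 k - cc k else mum k + real k - 3)"

lemma ip_comm: "ip k f g = ip k g f" unfolding ip_def by (simp add: mult.commute)

lemma colf_spec:
  assumes u: "u \<in> VS k" and s: "spec u"
  shows "colf k u = L (alf k u) 1 (xx (key u))"
  using u
proof (cases rule: VS_cases)
  case (l i)
  show ?thesis using l by (simp add: colf_def alf_def xx_def key_def)
next
  case (r S)
  show ?thesis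
  proof (cases "S = {2,3}")
    case True thus ?thesis using r by (simp add: colf_def alf_def xx_def key_def)
  next
    case False
    hence "1 \<in> S" using s r by (simp add: spec_def)
    thus ?thesis using r False Pr_with1[OF r(2)] by (simp add: colf_def alf_def xx_def key_def)
  qed
qed

lemma key_range:
  assumes u: "u \<in> VS k" and s: "spec u"
  shows "key u \<in> {1..k}"
  using u
proof (cases rule: VS_cases)
  case (l i)
  show ?thesis using l by (simp add: key_def)
next
  case (r S)
  show ?thesis
  proof (cases "S = {2,3}")
    case True thus ?thesis using r by (auto simp: key_def Pr_elem)
  next
    case False
    hence "1 \<in> S" using s r by (simp add: spec_def)
    thus ?thesis using r False Pr_with1[OF r(2)] by (simp add: key_def)
  qed
qed

lemma ssum_xx: "m \<in> {1..k} \<Longrightarrow> m \<noteq> 1 \<Longrightarrow> ssum k (xx m) = 0"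
  unfolding xx_def using ssum_hel[of m k] by auto

lemma ipn_xx: assumes "m \<in> {1..k}" "m' \<in> {1..k}" "m \<noteq> m'" shows "ipn k (xx m) (xx m') = 0"
proof -
  consider "m = 1" | "m' = 1" | "m \<noteq> 1" "m' \<noteq> 1" "m < m'" | "m \<noteq> 1" "m' \<noteq> 1" "m' < m"
    using assms by linarith
  thus ?thesis
  proof cases
    case 1 thus ?thesis using assms ipn_one_hel[of m' k] by (simp add: xx_def)
  next
    case 2 thus ?thesis using assms ipn_one_hel[of m k] by (simp add: xx_def ipn_comm)
  next
    case 3 thus ?thesis using assms ipn_hel[of m m' k] by (simp add: xx_def)
  next
    case 4 thus ?thesis using assms ipn_hel[of m' m k] by (simp add: xx_def ipn_comm)
  qed
qed

lemma xx_1: "m \<ge> 1 \<Longrightarrow> xx m 1 = 1" unfolding xx_def hel_def by auto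

lemma lam_al_prod: "k \<ge> 1 \<Longrightarrow> (lam1 k - cc k) * (lam2 k - cc k) = - 2 * (real k - 1)"
proof -
  assume k: "k \<ge> 1"
  have "(lam1 k - cc k) * (lam2 k - cc k) = lam1 k * lam2 k - cc k * (lam1 k + lam2 k) + cc k * cc k"
    by (simp add: algebra_simps)
  also have "\<dots> = - 2 * (real k - 1)" unfolding lam_prod[OF k] lam_sum unfolding pp_def tt_def
    by (simp add: algebra_simps)
  finally show ?thesis .
qed

lemma mu_al_prod: "(mup k + real k - 3) * (mum k + real k - 3) = 2 - real k"
proof -
  have "(mup k + real k - 3) * (mum k + real k - 3) = mup k * mum k + (real k - 3) * (mup k + mum k) + (real k - 3) * (real k - 3)"
    by (simp add: algebra_simps)
  also have "\<dots> = 2 - real k" unfolding mu_prod mu_sum by (simp add: algebra_simps)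
  finally show ?thesis .
qed

lemma ortho_same:
  assumes k: "k \<ge> 5" and i: "i \<in> {1..k}" and S: "S \<in> Pr k" "spec (Inr S)" and ky: "key (Inr S) = i"
  shows "ip k (colf k (Inl i)) (colf k (Inr S)) = 0"
proof (cases "i = 1")
  case True
  hence S23: "S = {2,3}"
  proof -
    { assume "S \<noteq> {2,3}"
      hence "1 \<in> S" using S by (simp add: spec_def)
      hence "Max S \<ge> 2" using Pr_with1[OF S(1)] by simp
      hence False using ky True `S \<noteq> {2,3}` by (simp add: key_def) }
    thus ?thesis by blast
  qed
  have "ip k (colf k (Inl i)) (colf k (Inr S)) = (lam1 k - cc k) * (lam2 k - cc k) * real k + ((real k - 2) * real k + real k * real k)"
    using True S23 by (simp add: colf_def ip_L ipn_def ssum_one)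
  also have "\<dots> = 0"
  proof -
    have P: "(lam1 k - cc k) * (lam2 k - cc k) = -2 * (real k - 1)" using k by (intro lam_al_prod) simp
    show ?thesis by (simp only: P) (simp add: algebra_simps)
  qed
  finally show ?thesis .
next
  case False
  hence nS: "S \<noteq> {2,3}" using ky by (auto simp: key_def)
  hence "1 \<in> S" using S by (simp add: spec_def)
  note P = Pr_with1[OF S(1) this]
  have MS: "Max S = i" using ky nS by (simp add: key_def)
  have "ip k (colf k (Inl i)) (colf k (Inr S)) = (mup k + real k - 3) * (mum k + real k - 3) * ipn k (hel i) (hel i) + ((real k - 2) * ipn k (hel i) (hel i))"
    using False nS `1 \<in> S` MS P i by (simp add: colf_def ip_L ssum_hel)
  also have "\<dots> = 0" by (simp only: mu_al_prod) (simp add: algebra_simps)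
  finally show ?thesis .
qed

lemma key_inj:
  assumes u: "u \<in> VS k" "spec u" and w: "w \<in> VS k" "spec w" and ky: "key u = key w"
    and uw: "u \<noteq> w"
  shows "(\<exists>i S. u = Inl i \<and> w = Inr S) \<or> (\<exists>i S. w = Inl i \<and> u = Inr S)"
proof -
  { fix S T assume ST: "u = Inr S" "w = Inr T"
    have "S \<in> Pr k" "T \<in> Pr k" using ST u w by (auto simp: VS_def)
    have "S = T"
    proof (cases "S = {2,3}")
      case True
      show ?thesis
      proof (rule ccontr)
        assume "S \<noteq> T"
        hence "T \<noteq> {2,3}" using True by simp
        hence "1 \<in> T" using w ST by (simp add: spec_def)
        hence "Max T \<ge> 2" using Pr_with1[OF `T \<in> Pr k`] by simp
        thus False using ky ST True `T \<noteq> {2,3}` by (simp add: key_def)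
      qed
    next
      case False
      hence "1 \<in> S" using u ST by (simp add: spec_def)
      note PS = Pr_with1[OF `S \<in> Pr k` this]
      show ?thesis
      proof (cases "T = {2,3}")
        case True
        thus ?thesis using ky ST False PS by (simp add: key_def)
      next
        case False2: False
        hence "1 \<in> T" using w ST by (simp add: spec_def)
        note PT = Pr_with1[OF `T \<in> Pr k` this]
        have "Max S = Max T" using ky ST False False2 by (simp add: key_def)
        thus ?thesis using PS PT by metis
      qed
    qed
    hence False using ST uw by simp }
  moreover
  { fix i j assume "u = Inl i" "w = Inl j"
    hence False using ky uw by (simp add: key_def) }
  ultimately show ?thesis by (cases u; cases w) auto
qed

lemma ortho:
  assumes k: "k \<ge> 5" and u: "u \<in> VS k" "spec u" and w: "w \<in> VS k" "spec w" and uw: "u \<noteq> w"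
  shows "ip k (colf k u) (colf k w) = 0"
proof (cases "key u = key w")
  case False
  note cu = colf_spec[OF u] key_range[OF u] and cw = colf_spec[OF w] key_range[OF w]
  have "ssum k (xx (key u)) * ssum k (xx (key w)) = 0"
    using False cu(2) cw(2) ssum_xx[of "key u" k] ssum_xx[of "key w" k] by (cases "key u = 1") auto
  thus ?thesis unfolding cu(1) cw(1) ip_L using ipn_xx[OF cu(2) cw(2) False] by simp
next
  case True
  from key_inj[OF u w True uw] show ?thesis
  proof
    assume "\<exists>i S. u = Inl i \<and> w = Inr S"
    then obtain i S where iS: "u = Inl i" "w = Inr S" by blast
    have "i \<in> {1..k}" "S \<in> Pr k" using iS u w by (auto simp: VS_def)
    thus ?thesis using ortho_same[OF k, of i S] iS w True by (simp add: key_def)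
  next
    assume "\<exists>i S. w = Inl i \<and> u = Inr S"
    then obtain i S where iS: "w = Inl i" "u = Inr S" by blast
    have "i \<in> {1..k}" "S \<in> Pr k" using iS u w by (auto simp: VS_def)
    thus ?thesis using ortho_same[OF k, of i S] iS u True by (simp add: key_def ip_comm)
  qed
qed

lemma norm_pos:
  assumes k: "k \<ge> 5" and u: "u \<in> VS k" "spec u"
  shows "ip k (colf k u) (colf k u) > 0"
proof -
  note cu = colf_spec[OF u] key_range[OF u]
  have n: "ipn k (xx (key u)) (xx (key u)) \<ge> 1" using cu(2) k by (intro ipn_pos xx_1) auto
  have "ip k (colf k u) (colf k u) = (alf k u)^2 * ipn k (xx (key u)) (xx (key u)) + ((real k - 2) * ipn k (xx (key u)) (xx (key u)) + (ssum k (xx (key u)))^2)"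
    unfolding cu(1) ip_L by (simp add: power2_eq_square)
  moreover have "(alf k u)^2 * ipn k (xx (key u)) (xx (key u)) \<ge> 0" using n by simp
  moreover have "(real k - 2) * ipn k (xx (key u)) (xx (key u)) > 0" using n k by simp
  moreover have "(ssum k (xx (key u)))^2 \<ge> 0" by simp
  ultimately show ?thesis by linarith
qed

lemma ortho_Z:
  assumes k: "k \<ge> 5" and u: "u \<in> VS k" "spec u" and w: "w \<in> VS k" "\<not> spec w"
  shows "ip k (colf k u) (colf k w) = 0"
proof -
  obtain S where S: "w = Inr S" "S \<in> Pr k" "1 \<notin> S" "S \<noteq> {2,3}" using w by (auto simp: VS_def spec_def)
  have "colf k w = Zf (zv S)" using S by (simp add: colf_def)
  thus ?thesis unfolding colf_spec[OF u] using ip_LZ[OF zv_ker[OF S(2,3)]] k by simp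
qed

lemma zv_eval:
  assumes "1 \<notin> S" "S \<noteq> {2,3}"
  shows "zv T S = (if S = T then 1 else 0)"
  using assms unfolding zv_def ind_def by auto

lemma indep:
  assumes k: "k \<ge> 5" and h: "\<forall>v\<in>VS k. (\<Sum>u\<in>VS k. c u * colf k u v) = 0"
  shows "\<forall>u\<in>VS k. c u = 0"
proof -
  have spec0: "c u = 0" if u: "u \<in> VS k" "spec u" for u
  proof -
    have "0 = (\<Sum>v\<in>VS k. colf k u v * (\<Sum>w\<in>VS k. c w * colf k w v))" using h by simp
    also have "\<dots> = (\<Sum>v\<in>VS k. \<Sum>w\<in>VS k. c w * (colf k u v * colf k w v))"
      by (simp add: sum_distrib_left mult.left_commute)
    also have "\<dots> = (\<Sum>w\<in>VS k. \<Sum>v\<in>VS k. c w * (colf k u v * colf k w v))" by (rule sum.swap)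
    also have "\<dots> = (\<Sum>w\<in>VS k. c w * ip k (colf k u) (colf k w))"
      unfolding ip_def by (simp add: sum_distrib_left)
    also have "\<dots> = c u * ip k (colf k u) (colf k u) + (\<Sum>w\<in>VS k - {u}. c w * ip k (colf k u) (colf k w))"
      using u by (simp add: sum.remove)
    also have "(\<Sum>w\<in>VS k - {u}. c w * ip k (colf k u) (colf k w)) = 0"
    proof (rule sum.neutral, rule ballI)
      fix w assume w: "w \<in> VS k - {u}"
      show "c w * ip k (colf k u) (colf k w) = 0"
      proof (cases "spec w")
        case True thus ?thesis using ortho[OF k u _ True] w by auto
      next
        case False thus ?thesis using ortho_Z[OF k u _ False] w by auto
      qed
    qed
    finally have "c u * ip k (colf k u) (colf k u) = 0" by simp
    thus "c u = 0" using norm_pos[OF k u] by simp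
  qed
  show ?thesis
  proof
    fix u assume u: "u \<in> VS k"
    show "c u = 0"
    proof (cases "spec u")
      case True thus ?thesis using spec0 u by blast
    next
      case False
      then obtain S where S: "u = Inr S" "S \<in> Pr k" "1 \<notin> S" "S \<noteq> {2,3}" using u by (auto simp: VS_def spec_def)
      have "Inr S \<in> VS k" using S u by simp
      hence "0 = (\<Sum>w\<in>VS k. c w * colf k w (Inr S))" using h by simp
      also have "\<dots> = c u * colf k u (Inr S) + (\<Sum>w\<in>VS k - {u}. c w * colf k w (Inr S))"
        using u by (simp add: sum.remove)
      also have "(\<Sum>w\<in>VS k - {u}. c w * colf k w (Inr S)) = 0"
      proof (rule sum.neutral, rule ballI)
        fix w assume w: "w \<in> VS k - {u}"
        show "c w * colf k w (Inr S) = 0"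
        proof (cases "spec w")
          case True thus ?thesis using spec0 w by auto
        next
          case False
          then obtain T where T: "w = Inr T" "T \<in> Pr k" "1 \<notin> T" "T \<noteq> {2,3}" using w by (auto simp: VS_def spec_def)
          have "T \<noteq> S" using w T S by auto
          thus ?thesis using T zv_eval[OF S(3,4), of T] by (simp add: colf_def Zf_def)
        qed
      qed
      also have "colf k u (Inr S) = 1" using S zv_eval[OF S(3,4), of S] by (simp add: colf_def Zf_def)
      finally show ?thesis by simp
    qed
  qed
qed

lemma set_pairs: "set [(i,j). i \<leftarrow> [a..<b], j \<leftarrow> [i+1..<c]] = {(i,j). a \<le> i \<and> i < b \<and> i < j \<and> j < c}"
  by auto

lemma distinct_pairs: "distinct [(i,j). i \<leftarrow> [a..<b], j \<leftarrow> [i+1..<c]]"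
proof (induction b)
  case 0 thus ?case by simp
next
  case (Suc b)
  show ?case
  proof (cases "a \<le> b")
    case False
    hence "[a..<Suc b] = []" by simp
    thus ?thesis by simp
  next
    case True
    hence e: "[a..<Suc b] = [a..<b] @ [b]" by simp
    have d2: "distinct (map (Pair b) [b+1..<c])" by (simp add: distinct_map inj_on_def)
    have disj: "set [(i,j). i \<leftarrow> [a..<b], j \<leftarrow> [i+1..<c]] \<inter> set (map (Pair b) [b+1..<c]) = {}"
      unfolding set_pairs by auto
    show ?thesis unfolding e using Suc.IH d2 disj by simp
  qed
qed

lemma W_vertices_alt: "W_vertices k = map Inl [1..<k+1] @ map (\<lambda>(i,j). Inr {i,j}) [(i,j). i \<leftarrow> [1..<k+1], j \<leftarrow> [i+1..<k+1]]"
  unfolding W_vertices_def ..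

lemma set_W_vertices: "set (W_vertices k) = VS k"
proof -
  define L where "L = [(i,j). i \<leftarrow> [1..<k+1], j \<leftarrow> [i+1..<k+1]]"
  have sL: "set L = {(i,j). 1 \<le> i \<and> i < k+1 \<and> i < j \<and> j < k+1}" unfolding L_def by (rule set_pairs)
  have eq: "{1..<k+1} = {1..k}" by auto
  have "set (W_vertices k) = Inl ` {1..k} \<union> (\<lambda>(i,j). Inr {i,j}) ` set L"
    unfolding W_vertices_alt L_def[symmetric] set_append set_map set_upt eq ..
  also have "(\<lambda>(i,j). Inr {i,j}) ` set L = (Inr ` Pr k :: (nat + nat set) set)"
  proof (intro equalityI subsetI)
    fix x :: "nat + nat set" assume "x \<in> (\<lambda>(i,j). Inr {i,j}) ` set L"
    then obtain p where p: "p \<in> set L" "x = (\<lambda>(i,j). Inr {i,j}) p" by blast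
    obtain i j where ij: "p = (i,j)" by (cases p)
    have "(i,j) \<in> set L" using p(1) ij by simp
    hence "1 \<le> i \<and> i < j \<and> j < k+1" unfolding sL by simp
    hence "1 \<le> i" "i < j" "j \<le> k" by linarith+
    hence "{i,j} \<in> Pr k" unfolding Pr_elem by blast
    thus "x \<in> Inr ` Pr k" using p(2) ij by simp
  next
    fix x :: "nat + nat set" assume "x \<in> Inr ` Pr k"
    then obtain S where S: "S \<in> Pr k" "x = Inr S" by blast
    then obtain i j where ij: "x = Inr {i,j}" "1 \<le> i" "i < j" "j \<le> k" unfolding Pr_elem by blast
    hence "(i,j) \<in> set L" unfolding sL by simp
    thus "x \<in> (\<lambda>(i,j). Inr {i,j}) ` set L" using ij(1) by (intro image_eqI[of _ _ "(i,j)"]) auto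
  qed
  finally show ?thesis unfolding VS_def .
qed

lemma distinct_W_vertices: "distinct (W_vertices k)"
proof -
  define L where "L = [(i,j). i \<leftarrow> [1..<k+1], j \<leftarrow> [i+1..<k+1]]"
  have sL: "set L = {(i,j). 1 \<le> i \<and> i < k+1 \<and> i < j \<and> j < k+1}" unfolding L_def by (rule set_pairs)
  have inj: "inj_on (\<lambda>(i,j). Inr {i,j} :: nat + nat set) (set L)"
    unfolding sL by (auto simp: inj_on_def doubleton_eq_iff)
  have dL: "distinct L" unfolding L_def by (rule distinct_pairs)
  have d2: "distinct (map (\<lambda>(i,j). Inr {i,j} :: nat + nat set) L)"
    by (rule iffD2[OF distinct_map], rule conjI[OF dL inj])
  have d1: "distinct (map Inl [1..<k+1] :: (nat + nat set) list)" by (simp add: distinct_map)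
  have disj: "set (map Inl [1..<k+1] :: (nat + nat set) list) \<inter> set (map (\<lambda>(i,j). Inr {i,j} :: nat + nat set) L) = {}"
    by auto
  show ?thesis unfolding W_vertices_alt L_def[symmetric] using d1 d2 disj by (simp only: distinct_append)
qed

lemma sum_vs_reindex:
  assumes "distinct vs"
  shows "(\<Sum>l\<in>{0..<length vs}. g (vs ! l)) = (\<Sum>w\<in>set vs. g w)"
proof -
  have "set vs = (\<lambda>l. vs ! l) ` {0..<length vs}" by (auto simp: in_set_conv_nth)
  moreover have "inj_on (\<lambda>l. vs ! l) {0..<length vs}" using assms by (auto simp: inj_on_def nth_eq_iff_index_eq)
  ultimately show ?thesis by (simp add: sum.reindex)
qed

lemma map_mat_mat: "map_mat f (mat n m g) = mat n m (\<lambda>ij. f (g ij))"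
  by (rule eq_matI) auto

theorem mainTheorem11:
  fixes k :: nat
  assumes "k \<ge> 5"
  shows "num_nonpos_eigenvalues (W_adj_mat k) = k - 1"
proof -
  have k: "k \<ge> 5" by fact
  define vs where "vs = W_vertices k"
  define n where "n = length vs"
  have dist: "distinct vs" unfolding vs_def by (rule distinct_W_vertices)
  have setv: "set vs = VS k" unfolding vs_def by (rule set_W_vertices)
  have vsin: "vs ! i \<in> VS k" if "i < n" for i using that setv n_def nth_mem by blast
  have reidx: "(\<Sum>l\<in>{0..<n}. g (vs ! l)) = (\<Sum>w\<in>VS k. g w)" for g :: "_ \<Rightarrow> real"
    using sum_vs_reindex[OF dist, of g] setv n_def by simp
  define A where "A = W_adj_mat k"
  have Adef: "A = mat n n (\<lambda>(i,j). adjr (vs ! i) (vs ! j))"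
    unfolding A_def W_adj_mat_def Let_def vs_def[symmetric] n_def[symmetric] adjr_def by simp
  define P where "P = mat n n (\<lambda>(i,j). colf k (vs ! j) (vs ! i))"
  define d where "d j = evf k (vs ! j)" for j
  define D where "D = mat n n (\<lambda>(i,j). if i = j then d i else (0::real))"
  have cA: "A \<in> carrier_mat n n" and cP: "P \<in> carrier_mat n n" and cD: "D \<in> carrier_mat n n"
    unfolding Adef P_def D_def by auto
  have AP: "A * P = P * D"
  proof (rule eq_matI)
    fix i j assume ij: "i < dim_row (P * D)" "j < dim_col (P * D)"
    hence i: "i < n" and j: "j < n" using cP cD by auto
    have "(A * P) $$ (i,j) = (\<Sum>l\<in>{0..<n}. adjr (vs ! i) (vs ! l) * colf k (vs ! j) (vs ! l))"
      using i j cA cP unfolding Adef P_def by (simp add: scalar_prod_def)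
    also have "\<dots> = Af k (colf k (vs ! j)) (vs ! i)" unfolding Af_def by (rule reidx)
    also have "\<dots> = evf k (vs ! j) * colf k (vs ! j) (vs ! i)" by (rule eig_col[OF k vsin[OF j] vsin[OF i]])
    also have "\<dots> = (P * D) $$ (i,j)"
    proof -
      have "(P * D) $$ (i,j) = (\<Sum>l\<in>{0..<n}. P $$ (i,l) * (if l = j then d l else 0))"
        using i j cP cD unfolding D_def by (simp add: scalar_prod_def)
      also have "\<dots> = P $$ (i,j) * d j" using j by (simp add: if_distrib cong: if_cong)
      finally show ?thesis using i j unfolding P_def d_def by simp
    qed
    finally show "(A * P) $$ (i,j) = (P * D) $$ (i,j)" .
  qed (use cA cP cD in auto)
  have dP: "det P \<noteq> 0"
  proof
    assume "det P = 0"
    then obtain v where v: "v \<in> carrier_vec n" "v \<noteq> 0\<^sub>v n" "P *\<^sub>v v = 0\<^sub>v n"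
      using det_0_iff_vec_prod_zero[OF cP] by auto
    have injv: "inj_on (\<lambda>l. vs ! l) {0..<n}" using dist n_def by (auto simp: inj_on_def nth_eq_iff_index_eq)
    define c where "c u = v $ (inv_into {0..<n} (\<lambda>l. vs ! l) u)" for u
    have cj: "c (vs ! j) = v $ j" if "j < n" for j unfolding c_def using inv_into_f_f[OF injv] that by simp
    have "\<forall>w\<in>VS k. (\<Sum>u\<in>VS k. c u * colf k u w) = 0"
    proof
      fix w assume w: "w \<in> VS k"
      then obtain i where i: "i < n" "vs ! i = w" using setv n_def by (metis in_set_conv_nth)
      have "(\<Sum>u\<in>VS k. c u * colf k u w) = (\<Sum>l\<in>{0..<n}. c (vs ! l) * colf k (vs ! l) w)"
        by (rule reidx[symmetric])
      also have "\<dots> = (\<Sum>l\<in>{0..<n}. P $$ (i,l) * v $ l)"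
        using i unfolding P_def by (intro sum.cong) (auto simp: cj mult.commute)
      also have "\<dots> = (P *\<^sub>v v) $ i" using i v(1) cP by (simp add: scalar_prod_def)
      also have "\<dots> = 0" using v i by simp
      finally show "(\<Sum>u\<in>VS k. c u * colf k u w) = 0" .
    qed
    hence c0: "\<forall>u\<in>VS k. c u = 0" by (rule indep[OF k])
    have "v = 0\<^sub>v n"
    proof (rule eq_vecI)
      fix j assume "j < dim_vec (0\<^sub>v n)"
      hence j: "j < n" by simp
      have "v $ j = c (vs ! j)" using cj[OF j] by simp
      thus "v $ j = 0\<^sub>v n $ j" using c0 vsin[OF j] j by simp
    qed (use v in simp)
    thus False using v by simp
  qed
  define e where "e i = complex_of_real (d i)" for i
  have cpoly: "char_poly (map_mat complex_of_real A) = (\<Prod>i<n. [:- e i, 1:])"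
  proof (rule char_poly_eig)
    show "map_mat complex_of_real A \<in> carrier_mat n n" using cA by simp
    show "map_mat complex_of_real P \<in> carrier_mat n n" using cP by simp
    show "det (map_mat complex_of_real P) \<noteq> 0" using dP by (simp add: of_real_hom.hom_det)
    have "map_mat complex_of_real A * map_mat complex_of_real P = map_mat complex_of_real (A * P)"
      using cA cP by (simp add: of_real_hom.mat_hom_mult)
    also have "\<dots> = map_mat complex_of_real (P * D)" by (simp add: AP)
    also have "\<dots> = map_mat complex_of_real P * map_mat complex_of_real D"
      using cP cD by (simp add: of_real_hom.mat_hom_mult)
    also have "map_mat complex_of_real D = mat n n (\<lambda>(i,j). if i = j then e i else 0)"
      unfolding D_def e_def map_mat_mat by (intro arg_cong[where f="mat n n"]) auto
    finally show "map_mat complex_of_real A * map_mat complex_of_real P = map_mat complex_of_real P * mat n n (\<lambda>(i,j). if i = j then e i else 0)" .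
  qed
  define p where "p = (\<Prod>i<n. [:- e i, 1:])"
  define R where "R = {x. poly p x = 0 \<and> Im x = 0 \<and> Re x \<le> 0}"
  have p0: "p \<noteq> 0" unfolding p_def by (simp add: prod_zero_iff)
  have finR: "finite R" unfolding R_def using poly_roots_finite[OF p0] by (rule finite_subset[rotated]) auto
  have "num_nonpos_eigenvalues (W_adj_mat k) = (\<Sum>x\<in>R. order x p)"
    unfolding num_nonpos_eigenvalues_def A_def[symmetric] cpoly p_def[symmetric] R_def ..
  also have "\<dots> = (\<Sum>x\<in>R. card {i\<in>{..<n}. e i = x})"
    unfolding p_def by (intro sum.cong refl order_lin_prod) simp
  also have "\<dots> = card (\<Union>x\<in>R. {i\<in>{..<n}. e i = x})"
    by (rule card_UN_disjoint[symmetric]) (use finR in auto)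
  also have "(\<Union>x\<in>R. {i\<in>{..<n}. e i = x}) = {i\<in>{..<n}. d i \<le> 0}"
  proof -
    have "poly p (e i) = 0" if "i < n" for i
      unfolding p_def poly_prod using that by (intro prod_zero[of "{..<n}"]) (auto intro!: bexI[of _ i])
    thus ?thesis unfolding R_def e_def by auto
  qed
  also have "card {i\<in>{..<n}. d i \<le> 0} = card {u\<in>VS k. evf k u \<le> 0}"
  proof -
    have "(\<lambda>i. vs ! i) ` {i\<in>{..<n}. d i \<le> 0} = {u\<in>VS k. evf k u \<le> 0}"
    proof (intro equalityI subsetI)
      fix x assume "x \<in> (\<lambda>i. vs ! i) ` {i\<in>{..<n}. d i \<le> 0}"
      thus "x \<in> {u\<in>VS k. evf k u \<le> 0}" unfolding d_def using vsin by auto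
    next
      fix x assume x: "x \<in> {u\<in>VS k. evf k u \<le> 0}"
      hence "x \<in> set vs" using setv by simp
      then obtain i where i: "i < n" "vs ! i = x" unfolding n_def in_set_conv_nth by blast
      thus "x \<in> (\<lambda>i. vs ! i) ` {i\<in>{..<n}. d i \<le> 0}" using x unfolding d_def by (intro image_eqI[of _ _ i]) auto
    qed
    moreover have "inj_on (\<lambda>i. vs ! i) {i\<in>{..<n}. d i \<le> 0}"
      using dist n_def by (auto simp: inj_on_def nth_eq_iff_index_eq)
    ultimately show ?thesis by (metis card_image)
  qed
  also have "{u\<in>VS k. evf k u \<le> 0} = Inr ` ((\<lambda>j. {1,j}) ` ({1..k} - {1}))"
  proof -
    have "{u\<in>VS k. evf k u \<le> 0} = Inr ` {S\<in>Pr k. 1 \<in> S}"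
    proof (intro equalityI subsetI)
      fix u assume u: "u \<in> {u\<in>VS k. evf k u \<le> 0}"
      hence uV: "u \<in> VS k" and ev: "evf k u \<le> 0" by auto
      from uV show "u \<in> Inr ` {S\<in>Pr k. 1 \<in> S}"
      proof (cases rule: VS_cases)
        case (l i) thus ?thesis using ev lam1_pos[OF k] mup_pos[of k] k
          by (auto simp: evf_def split: if_splits)
      next
        case (r S) thus ?thesis using ev lam2_pos[OF k]
          by (auto simp: evf_def split: if_splits)
      qed
    next
      fix u :: "nat + nat set" assume "u \<in> Inr ` {S\<in>Pr k. 1 \<in> S}"
      then obtain S where S: "u = Inr S" "S \<in> Pr k" "1 \<in> S" by auto
      have "S \<noteq> {2,3}" using S by auto
      thus "u \<in> {u\<in>VS k. evf k u \<le> 0}" using S mum_neg[of k] k by (auto simp: evf_def VS_def)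
    qed
    thus ?thesis using Pr_containing[of 1 k] k by simp
  qed
  also have "card (Inr ` ((\<lambda>j. {1,j}) ` ({1..k} - {1})) :: (nat + nat set) set) = k - 1"
  proof -
    have "card (Inr ` ((\<lambda>j. {1,j}) ` ({1..k} - {1})) :: (nat + nat set) set) = card ((\<lambda>j. {1::nat,j}) ` ({1..k} - {1}))"
      by (rule card_image) simp
    also have "\<dots> = card ({1..k} - {1::nat})" by (rule card_image) (auto simp: inj_on_def doubleton_eq_iff)
    also have "\<dots> = k - 1" using k by simp
    finally show ?thesis .
  qed
  finally show ?thesis .
qed

end
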